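(* Let $L=E[C_1,\dots,C_n]$ be a congruence uniform lattice, i.e. each $C_i$ is an interval of $E[C_1,\dots,C_{i-1}]$. Then $L$ is left modular if and only if, for every $i\in[n]$, $C_i$ contains an element of the spine of $E[C_1,\dots,C_{i-1}]$.
   Context: All lattices are finite. For a convex subset $C$ of a lattice $L$, let $I_L(C)=\{y\in L\mid\exists x\in C,\ y\le x\}$, and the doubling $L[C]$ is the subposet of $L\times\{0<1\}$ on $\big(I_L(C)\times\{0\}\big)\sqcup\big(((L\setminus I_L(C))\cup C)\times\{1\}\big)$. $E[\,]$ is the one-element lattice and $E[C_1,\dots,C_{i+1}]:=E[C_1,\dots,C_i][C_{i+1}]$ with $C_{i+1}$ a nonempty interval of $E[C_1,\dots,C_i]$. The spine of a poset is the set of elements lying on some chain of maximum length. An element $a$ is left modular if for all $b<c$, $(b\vee a)\wedge c=b\vee(a\wedge c)$; a lattice is left modular if it has a maximal chain consisting of left modular elements. *)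

theory Defs
  imports Main
begin

type_synonym 'a poset = "'a set \<times> ('a \<Rightarrow> 'a \<Rightarrow> bool)"

definition carrier :: "'a poset \<Rightarrow> 'a set" where "carrier P = fst P"
definition leq :: "'a poset \<Rightarrow> 'a \<Rightarrow> 'a \<Rightarrow> bool" where "leq P = snd P"

definition pjoin :: "'a poset \<Rightarrow> 'a \<Rightarrow> 'a \<Rightarrow> 'a" where
  "pjoin P x y = (THE z. z \<in> carrier P \<and> leq P x z \<and> leq P y z \<and>
      (\<forall>w\<in>carrier P. leq P x w \<and> leq P y w \<longrightarrow> leq P z w))"

definition pmeet :: "'a poset \<Rightarrow> 'a \<Rightarrow> 'a \<Rightarrow> 'a" where
  "pmeet P x y = (THE z. z \<in> carrier P \<and> leq P z x \<and> leq P z y \<and>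
      (\<forall>w\<in>carrier P. leq P w x \<and> leq P w y \<longrightarrow> leq P w z))"

definition is_chain :: "'a poset \<Rightarrow> 'a set \<Rightarrow> bool" where
  "is_chain P S \<longleftrightarrow> S \<subseteq> carrier P \<and> (\<forall>x\<in>S. \<forall>y\<in>S. leq P x y \<or> leq P y x)"

definition maximal_chain :: "'a poset \<Rightarrow> 'a set \<Rightarrow> bool" where
  "maximal_chain P S \<longleftrightarrow> is_chain P S \<and> (\<forall>T. is_chain P T \<and> S \<subseteq> T \<longrightarrow> T = S)"

definition spine :: "'a poset \<Rightarrow> 'a set" where
  "spine P = \<Union>{S. is_chain P S \<and> (\<forall>T. is_chain P T \<longrightarrow> card T \<le> card S)}"

definition left_modular_elem :: "'a poset \<Rightarrow> 'a \<Rightarrow> bool" where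
  "left_modular_elem P a \<longleftrightarrow> a \<in> carrier P \<and>
     (\<forall>b\<in>carrier P. \<forall>c\<in>carrier P. leq P b c \<and> b \<noteq> c \<longrightarrow>
        pmeet P (pjoin P b a) c = pjoin P b (pmeet P a c))"

definition left_modular :: "'a poset \<Rightarrow> bool" where
  "left_modular P \<longleftrightarrow> (\<exists>S. maximal_chain P S \<and> (\<forall>a\<in>S. left_modular_elem P a))"

definition is_interval :: "'a poset \<Rightarrow> 'a set \<Rightarrow> bool" where
  "is_interval P C \<longleftrightarrow> (\<exists>a\<in>carrier P. \<exists>b\<in>carrier P. leq P a b \<and>
      C = {z\<in>carrier P. leq P a z \<and> leq P z b})"

definition down_of :: "'a poset \<Rightarrow> 'a set \<Rightarrow> 'a set" where
  "down_of P C = {y\<in>carrier P. \<exists>x\<in>C. leq P y x}"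

text \<open>Doubling. Elements of L \<times> {0<1} are encoded as lists x @ [b], where x is
  the element of L and b is the second coordinate (False = 0, True = 1);
  the order is the product order.\<close>
definition double :: "bool list poset \<Rightarrow> bool list set \<Rightarrow> bool list poset" where
  "double P C =
     ((\<lambda>x. x @ [False]) ` down_of P C \<union>
      (\<lambda>x. x @ [True]) ` ((carrier P - down_of P C) \<union> C),
      \<lambda>x y. leq P (butlast x) (butlast y) \<and> (last x \<longrightarrow> last y))"

definition E_seq :: "bool list set list \<Rightarrow> bool list poset" where
  "E_seq Cs = foldl double ({[]}, \<lambda>x y. True) Cs"

definition valid_seq :: "bool list set list \<Rightarrow> bool" where
  "valid_seq Cs \<longleftrightarrow> (\<forall>i<length Cs. is_interval (E_seq (take i Cs)) (Cs ! i) \<and> Cs ! i \<noteq> {})"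

end

theory Submission
  imports Defs
begin

lemma pjoin_eqI:
  assumes anti: "\<And>u v. u \<in> carrier P \<Longrightarrow> v \<in> carrier P \<Longrightarrow> leq P u v \<Longrightarrow> leq P v u \<Longrightarrow> u = v"
    and z: "z \<in> carrier P" "leq P x z" "leq P y z" "\<forall>w\<in>carrier P. leq P x w \<and> leq P y w \<longrightarrow> leq P z w"
  shows "pjoin P x y = z"
  unfolding pjoin_def
  by (rule the_equality) (use z anti in blast)+

lemma pmeet_eqI:
  assumes anti: "\<And>u v. u \<in> carrier P \<Longrightarrow> v \<in> carrier P \<Longrightarrow> leq P u v \<Longrightarrow> leq P v u \<Longrightarrow> u = v"
    and z: "z \<in> carrier P" "leq P z x" "leq P z y" "\<forall>w\<in>carrier P. leq P w x \<and> leq P w y \<longrightarrow> leq P w z"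
  shows "pmeet P x y = z"
  unfolding pmeet_def
  by (rule the_equality) (use z anti in blast)+

locale flat =
  fixes P :: "'a poset"
  assumes fin: "finite (carrier P)"
    and ne: "carrier P \<noteq> {}"
    and refl: "x \<in> carrier P \<Longrightarrow> leq P x x"
    and anti: "x \<in> carrier P \<Longrightarrow> y \<in> carrier P \<Longrightarrow> leq P x y \<Longrightarrow> leq P y x \<Longrightarrow> x = y"
    and trans: "x \<in> carrier P \<Longrightarrow> y \<in> carrier P \<Longrightarrow> z \<in> carrier P \<Longrightarrow> leq P x y \<Longrightarrow> leq P y z \<Longrightarrow> leq P x z"
    and exj: "x \<in> carrier P \<Longrightarrow> y \<in> carrier P \<Longrightarrow> \<exists>z\<in>carrier P. leq P x z \<and> leq P y z \<and> (\<forall>w\<in>carrier P. leq P x w \<and> leq P y w \<longrightarrow> leq P z w)"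
    and exm: "x \<in> carrier P \<Longrightarrow> y \<in> carrier P \<Longrightarrow> \<exists>z\<in>carrier P. leq P z x \<and> leq P z y \<and> (\<forall>w\<in>carrier P. leq P w x \<and> leq P w y \<longrightarrow> leq P w z)"
begin

abbreviation "A \<equiv> carrier P"
abbreviation "le \<equiv> leq P"
abbreviation "jn \<equiv> pjoin P"
abbreviation "mt \<equiv> pmeet P"

lemma jn_props:
  assumes "x \<in> A" "y \<in> A"
  shows "jn x y \<in> A \<and> le x (jn x y) \<and> le y (jn x y) \<and> (\<forall>w\<in>A. le x w \<and> le y w \<longrightarrow> le (jn x y) w)"
proof -
  obtain z where z: "z \<in> A" "le x z" "le y z" "\<forall>w\<in>A. le x w \<and> le y w \<longrightarrow> le z w"
    using exj[OF assms] by blast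
  have "jn x y = z" by (rule pjoin_eqI[OF anti z]) auto
  thus ?thesis using z by simp
qed

lemma mt_props:
  assumes "x \<in> A" "y \<in> A"
  shows "mt x y \<in> A \<and> le (mt x y) x \<and> le (mt x y) y \<and> (\<forall>w\<in>A. le w x \<and> le w y \<longrightarrow> le w (mt x y))"
proof -
  obtain z where z: "z \<in> A" "le z x" "le z y" "\<forall>w\<in>A. le w x \<and> le w y \<longrightarrow> le w z"
    using exm[OF assms] by blast
  have "mt x y = z" by (rule pmeet_eqI[OF anti z]) auto
  thus ?thesis using z by simp
qed

lemma jn_in: "x \<in> A \<Longrightarrow> y \<in> A \<Longrightarrow> jn x y \<in> A" using jn_props by blast
lemma jn_ub1: "x \<in> A \<Longrightarrow> y \<in> A \<Longrightarrow> le x (jn x y)" using jn_props by blast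
lemma jn_ub2: "x \<in> A \<Longrightarrow> y \<in> A \<Longrightarrow> le y (jn x y)" using jn_props by blast
lemma jn_least: "x \<in> A \<Longrightarrow> y \<in> A \<Longrightarrow> w \<in> A \<Longrightarrow> le x w \<Longrightarrow> le y w \<Longrightarrow> le (jn x y) w" using jn_props by blast
lemma mt_in: "x \<in> A \<Longrightarrow> y \<in> A \<Longrightarrow> mt x y \<in> A" using mt_props by blast
lemma mt_lb1: "x \<in> A \<Longrightarrow> y \<in> A \<Longrightarrow> le (mt x y) x" using mt_props by blast
lemma mt_lb2: "x \<in> A \<Longrightarrow> y \<in> A \<Longrightarrow> le (mt x y) y" using mt_props by blast
lemma mt_greatest: "x \<in> A \<Longrightarrow> y \<in> A \<Longrightarrow> w \<in> A \<Longrightarrow> le w x \<Longrightarrow> le w y \<Longrightarrow> le w (mt x y)" using mt_props by blast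

lemma jn_comm: "x \<in> A \<Longrightarrow> y \<in> A \<Longrightarrow> jn x y = jn y x"
  by (meson anti jn_in jn_least jn_ub1 jn_ub2)
lemma mt_comm: "x \<in> A \<Longrightarrow> y \<in> A \<Longrightarrow> mt x y = mt y x"
  by (meson anti mt_in mt_greatest mt_lb1 mt_lb2)
lemma jn_absorb: "x \<in> A \<Longrightarrow> y \<in> A \<Longrightarrow> le x y \<Longrightarrow> jn x y = y"
  by (meson anti jn_in jn_least jn_ub2 refl)
lemma mt_absorb: "x \<in> A \<Longrightarrow> y \<in> A \<Longrightarrow> le x y \<Longrightarrow> mt x y = x"
  by (meson anti mt_in mt_greatest mt_lb1 refl)

lemma lm_eq:
  assumes "left_modular_elem P m" "p \<in> A" "q \<in> A" "le p q"
  shows "mt (jn p m) q = jn p (mt m q)"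
proof (cases "p = q")
  case True
  have m: "m \<in> A" using assms(1) unfolding left_modular_elem_def by blast
  have "mt (jn p m) q = q" using True m assms
    by (metis jn_in jn_ub1 mt_absorb mt_comm)
  moreover have "jn p (mt m q) = p" using True m assms
    by (metis jn_absorb jn_comm mt_in mt_lb2)
  ultimately show ?thesis using True by simp
next
  case False
  then show ?thesis using assms unfolding left_modular_elem_def by blast
qed

end

context flat begin

lemma chain_sub: "is_chain P S \<Longrightarrow> S \<subseteq> A" unfolding is_chain_def by blast
lemma chain_cmp: "is_chain P S \<Longrightarrow> x \<in> S \<Longrightarrow> y \<in> S \<Longrightarrow> le x y \<or> le y x" unfolding is_chain_def by blast
lemma chain_fin: "is_chain P S \<Longrightarrow> finite S" using chain_sub fin finite_subset by blast

lemma chain_max: "finite S \<Longrightarrow> S \<noteq> {} \<Longrightarrow> is_chain P S \<Longrightarrow> \<exists>x\<in>S. \<forall>y\<in>S. le y x"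
proof (induction S rule: finite_ne_induct)
  case (singleton x)
  then show ?case using refl unfolding is_chain_def by auto
next
  case (insert x F)
  then have cF: "is_chain P F" unfolding is_chain_def by auto
  obtain m where m: "m \<in> F" "\<forall>y\<in>F. le y m" using insert cF by blast
  have xm: "le x m \<or> le m x" using insert.prems m(1) unfolding is_chain_def by auto
  have sub: "insert x F \<subseteq> A" using insert.prems chain_sub by blast
  show ?case
  proof (cases "le m x")
    case True
    have "\<forall>y\<in>insert x F. le y x"
    proof
      fix y assume y: "y \<in> insert x F"
      show "le y x"
      proof (cases "y = x")
        case True then show ?thesis using refl sub by auto
      next
        case False then have "y \<in> F" using y by auto
        then show ?thesis using trans[of y m x] m \<open>le m x\<close> sub by auto
      qed
    qed
    then show ?thesis by blast
  next
    case False
    then show ?thesis using m sub xm by auto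
  qed
qed

lemma chain_min: "finite S \<Longrightarrow> S \<noteq> {} \<Longrightarrow> is_chain P S \<Longrightarrow> \<exists>x\<in>S. \<forall>y\<in>S. le x y"
proof (induction S rule: finite_ne_induct)
  case (singleton x)
  then show ?case using refl unfolding is_chain_def by auto
next
  case (insert x F)
  then have cF: "is_chain P F" unfolding is_chain_def by auto
  obtain m where m: "m \<in> F" "\<forall>y\<in>F. le m y" using insert cF by blast
  have xm: "le x m \<or> le m x" using insert.prems m(1) unfolding is_chain_def by auto
  have sub: "insert x F \<subseteq> A" using insert.prems chain_sub by blast
  show ?case
  proof (cases "le x m")
    case True
    have "\<forall>y\<in>insert x F. le x y"
    proof
      fix y assume y: "y \<in> insert x F"
      show "le x y"
      proof (cases "y = x")
        case True then show ?thesis using refl sub by auto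
      next
        case False then have "y \<in> F" using y by auto
        then show ?thesis using trans[of x m y] m \<open>le x m\<close> sub by auto
      qed
    qed
    then show ?thesis by blast
  next
    case False
    then show ?thesis using m sub xm by auto
  qed
qed

lemma lower_bound_ex: "finite S \<Longrightarrow> S \<noteq> {} \<Longrightarrow> S \<subseteq> A \<Longrightarrow> \<exists>b\<in>A. \<forall>x\<in>S. le b x"
proof (induction S rule: finite_ne_induct)
  case (singleton x)
  then show ?case using refl by auto
next
  case (insert x F)
  obtain m where m: "m \<in> A" "\<forall>y\<in>F. le m y" using insert by auto
  have x: "x \<in> A" using insert by auto
  show ?case
  proof (rule bexI[of _ "mt x m"])
    show "mt x m \<in> A" using m x mt_in by blast
    show "\<forall>y\<in>insert x F. le (mt x m) y"
    proof
      fix y assume y: "y \<in> insert x F"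
      show "le (mt x m) y"
      proof (cases "y = x")
        case True then show ?thesis using mt_lb1 m x by auto
      next
        case False then have "y \<in> F" using y by auto
        then show ?thesis using trans[of "mt x m" m y] m x mt_lb2 mt_in insert.prems by auto
      qed
    qed
  qed
qed

lemma upper_bound_ex: "finite S \<Longrightarrow> S \<noteq> {} \<Longrightarrow> S \<subseteq> A \<Longrightarrow> \<exists>b\<in>A. \<forall>x\<in>S. le x b"
proof (induction S rule: finite_ne_induct)
  case (singleton x)
  then show ?case using refl by auto
next
  case (insert x F)
  obtain m where m: "m \<in> A" "\<forall>y\<in>F. le y m" using insert by auto
  have x: "x \<in> A" using insert by auto
  show ?case
  proof (rule bexI[of _ "jn x m"])
    show "jn x m \<in> A" using m x jn_in by blast
    show "\<forall>y\<in>insert x F. le y (jn x m)"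
    proof
      fix y assume y: "y \<in> insert x F"
      show "le y (jn x m)"
      proof (cases "y = x")
        case True then show ?thesis using jn_ub1 m x by auto
      next
        case False then have "y \<in> F" using y by auto
        then show ?thesis using trans[of y m "jn x m"] m x jn_ub2 jn_in insert.prems by auto
      qed
    qed
  qed
qed

lemma bot_ex: "\<exists>b\<in>A. \<forall>x\<in>A. le b x" by (rule lower_bound_ex[OF fin ne subset_refl])
lemma top_ex: "\<exists>b\<in>A. \<forall>x\<in>A. le x b" by (rule upper_bound_ex[OF fin ne subset_refl])

lemma maxch_add:
  assumes "maximal_chain P M" "z \<in> A" "\<forall>x\<in>M. le x z \<or> le z x"
  shows "z \<in> M"
proof -
  have M: "is_chain P M" using assms(1) unfolding maximal_chain_def by blast
  have "is_chain P (insert z M)" unfolding is_chain_def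
  proof (intro conjI ballI)
    show "insert z M \<subseteq> A" using M assms(2) unfolding is_chain_def by blast
  next
    fix x y assume "x \<in> insert z M" "y \<in> insert z M"
    then show "le x y \<or> le y x" using M assms(2,3) refl unfolding is_chain_def by blast
  qed
  then show ?thesis using assms(1) unfolding maximal_chain_def by blast
qed

lemma count_lemma:
  assumes "finite Y" "Y \<noteq> {}" "is_chain P Y" "f ` Y \<subseteq> A" "g ` Y \<subseteq> A"
    "\<forall>u\<in>Y. \<forall>v\<in>Y. le u v \<longrightarrow> le (f u) (f v) \<and> le (g u) (g v)"
    "\<forall>u\<in>Y. \<forall>v\<in>Y. le u v \<and> u \<noteq> v \<longrightarrow> f u \<noteq> f v \<or> g u \<noteq> g v"
  shows "card Y + 1 \<le> card (f ` Y) + card (g ` Y)"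
  using assms
proof (induction "card Y" arbitrary: Y rule: less_induct)
  case less
  obtain v where v: "v \<in> Y" "\<forall>y\<in>Y. le y v" using chain_max[OF less.prems(1,2,3)] by blast
  show ?case
  proof (cases "Y = {v}")
    case True
    then show ?thesis by simp
  next
    case False
    define Y0 where "Y0 = Y - {v}"
    have Y0ne: "Y0 \<noteq> {}" using False v(1) Y0_def by auto
    have Y0fin: "finite Y0" using less.prems Y0_def by auto
    have cY0: "is_chain P Y0" using less.prems(3) Y0_def unfolding is_chain_def by auto
    have lt: "card Y0 < card Y" unfolding Y0_def using less.prems(1) v(1) by (rule card_Diff1_less)
    have IH: "card Y0 + 1 \<le> card (f ` Y0) + card (g ` Y0)"
      apply (rule less.hyps[OF lt Y0fin Y0ne cY0])
      using less.prems Y0_def by auto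
    obtain u where u: "u \<in> Y0" "\<forall>y\<in>Y0. le y u" using chain_max[OF Y0fin Y0ne cY0] by blast
    have uY: "u \<in> Y" "u \<noteq> v" using u Y0_def by auto
    have uv: "le u v" using v uY by auto
    have Y: "Y = insert v Y0" using v Y0_def by auto
    have cardY: "card Y = card Y0 + 1" using lt unfolding Y0_def using less.prems(1) v(1) by (simp add: card_Diff_singleton)
    have sep: "f u \<noteq> f v \<or> g u \<noteq> g v" using less.prems(7) uY v(1) uv by blast
    have YA: "Y \<subseteq> A" using less.prems(3) chain_sub by blast
    have mono: "\<And>p q. p \<in> Y \<Longrightarrow> q \<in> Y \<Longrightarrow> le p q \<Longrightarrow> le (f p) (f q) \<and> le (g p) (g q)"
      using less.prems(6) by blast
    have new: "f v \<notin> f ` Y0 \<or> g v \<notin> g ` Y0"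
    proof (rule ccontr)
      assume "\<not> ?thesis"
      then obtain u1 u2 where u12: "u1 \<in> Y0" "f v = f u1" "u2 \<in> Y0" "g v = g u2" by blast
      have u1Y: "u1 \<in> Y" "u2 \<in> Y" using u12 Y0_def by auto
      have a1: "le (f u1) (f u)" using mono[OF u1Y(1) uY(1)] u(2) u12(1) by blast
      have a2: "le (g u2) (g u)" using mono[OF u1Y(2) uY(1)] u(2) u12(3) by blast
      have a3: "le (f u) (f v)" "le (g u) (g v)" using mono[OF uY(1) v(1) uv] by auto
      have inA: "f u \<in> A" "f v \<in> A" "g u \<in> A" "g v \<in> A" using less.prems(4,5) uY v by auto
      have "f u = f v" using anti[OF inA(1,2) a3(1)] a1 u12(2) by simp
      moreover have "g u = g v" using anti[OF inA(3,4) a3(2)] a2 u12(4) by simp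
      ultimately show False using sep by blast
    qed
    have f: "f ` Y = insert (f v) (f ` Y0)" "g ` Y = insert (g v) (g ` Y0)" using Y by auto
    have c1: "card (f ` Y) = card (f ` Y0) + (if f v \<in> f ` Y0 then 0 else 1)"
      unfolding f(1) using Y0fin by (simp add: card_insert_if)
    have c2: "card (g ` Y) = card (g ` Y0) + (if g v \<in> g ` Y0 then 0 else 1)"
      unfolding f(2) using Y0fin by (simp add: card_insert_if)
    have "card (f ` Y) + card (g ` Y) \<ge> card (f ` Y0) + card (g ` Y0) + 1"
      using new c1 c2 by (cases "f v \<in> f ` Y0"; cases "g v \<in> g ` Y0") auto
    then show ?thesis using IH cardY by linarith
  qed
qed

end

context flat begin

lemma maxch_chain: "maximal_chain P M \<Longrightarrow> is_chain P M" unfolding maximal_chain_def by blast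

lemma T1_aux:
  assumes M: "maximal_chain P M" and lm: "\<forall>a\<in>M. left_modular_elem P a"
  shows "m \<in> M \<Longrightarrow> is_chain P Y \<Longrightarrow> \<forall>y\<in>Y. le y m \<Longrightarrow> card Y \<le> card {x\<in>M. le x m}"
proof (induction "card {x\<in>M. le x m}" arbitrary: m Y rule: less_induct)
  case less
  have cM: "is_chain P M" using M by (rule maxch_chain)
  have MA: "M \<subseteq> A" using cM by (rule chain_sub)
  have finM: "finite M" using cM by (rule chain_fin)
  have mA: "m \<in> A" using less.prems(1) MA by blast
  have YA: "Y \<subseteq> A" using less.prems(2) by (rule chain_sub)
  have finY: "finite Y" using less.prems(2) by (rule chain_fin)
  define S where "S = {x\<in>M. le x m}"
  have finS: "finite S" using finM S_def by simp
  have mS: "m \<in> S" using S_def less.prems(1) refl mA by simp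
  define B where "B = {x\<in>M. le x m \<and> x \<noteq> m}"
  show ?case
  proof (cases "B = {}")
    case True
    have "Y \<subseteq> {m}"
    proof
      fix y assume y: "y \<in> Y"
      have yA: "y \<in> A" using y YA by blast
      have ym: "le y m" using less.prems(3) y by blast
      have "\<forall>x\<in>M. le x y \<or> le y x"
      proof
        fix x assume x: "x \<in> M"
        have xA: "x \<in> A" using x MA by blast
        have "le x m \<or> le m x" using chain_cmp[OF cM x less.prems(1)] .
        then show "le x y \<or> le y x"
        proof
          assume "le x m"
          then have "x = m" using True x B_def by blast
          then show ?thesis using ym by blast
        next
          assume "le m x"
          then show ?thesis using trans[OF yA mA xA ym] by blast
        qed
      qed
      then have "y \<in> M" using maxch_add[OF M yA] by blast
      then have "y = m" using True ym B_def by blast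
      then show "y \<in> {m}" by simp
    qed
    then have "card Y \<le> card {m}" by (intro card_mono) simp_all
    also have "\<dots> \<le> card S" using card_mono[OF finS, of "{m}"] mS by simp
    finally show ?thesis unfolding S_def .
  next
    case False
    have finB: "finite B" using finM B_def by simp
    have cB: "is_chain P B" using cM B_def unfolding is_chain_def by blast
    obtain m' where m': "m' \<in> B" "\<forall>y\<in>B. le y m'" using chain_max[OF finB False cB] by blast
    have m'M: "m' \<in> M" and m'm: "le m' m" "m' \<noteq> m" using m' B_def by auto
    have m'A: "m' \<in> A" using m'M MA by blast
    have lm': "left_modular_elem P m'" using lm m'M by blast
    define S' where "S' = {x\<in>M. le x m'}"
    have S'eq: "S' = S - {m}"
    proof
      show "S' \<subseteq> S - {m}"
      proof
        fix x assume "x \<in> S'"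
        then have x: "x \<in> M" "le x m'" using S'_def by auto
        then have xA: "x \<in> A" using MA by blast
        have "le x m" using trans[OF xA m'A mA x(2) m'm(1)] .
        moreover have "x \<noteq> m" using x(2) m'm anti[OF m'A mA] by blast
        ultimately show "x \<in> S - {m}" using x S_def by blast
      qed
    next
      show "S - {m} \<subseteq> S'" using m'(2) S_def S'_def B_def by blast
    qed
    have "card S > 0" using mS finS card_gt_0_iff by blast
    then have cardS': "card S' + 1 = card S" using S'eq mS finS
      by (simp add: card_Diff_singleton)
    have IH: "\<And>Z. is_chain P Z \<Longrightarrow> \<forall>y\<in>Z. le y m' \<Longrightarrow> card Z \<le> card S'"
    proof -
      fix Z assume Z: "is_chain P Z" "\<forall>y\<in>Z. le y m'"
      have "card S' < card S" using cardS' by linarith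
      then show "card Z \<le> card S'" unfolding S'_def
        using less.hyps[of m' Z] m'M Z S_def by blast
    qed
    show ?thesis
    proof (cases "Y = {}")
      case True
      then show ?thesis by simp
    next
      case Yne: False
      define f where "f = (\<lambda>y. mt y m')"
      define g where "g = (\<lambda>y. jn y m')"
      have fA: "f ` Y \<subseteq> A" using YA m'A mt_in f_def by blast
      have gA: "g ` Y \<subseteq> A" using YA m'A jn_in g_def by blast
      have mono: "\<forall>u\<in>Y. \<forall>v\<in>Y. le u v \<longrightarrow> le (f u) (f v) \<and> le (g u) (g v)"
      proof (intro ballI impI)
        fix u v assume uv: "u \<in> Y" "v \<in> Y" "le u v"
        have uA: "u \<in> A" and vA: "v \<in> A" using uv YA by auto
        have "le (mt u m') v" using trans[OF mt_in[OF uA m'A] uA vA mt_lb1[OF uA m'A] uv(3)] .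
        then have 1: "le (f u) (f v)" unfolding f_def
          using mt_greatest[OF vA m'A mt_in[OF uA m'A]] mt_lb2[OF uA m'A] by blast
        have "le u (jn v m')" using trans[OF uA vA jn_in[OF vA m'A] uv(3) jn_ub1[OF vA m'A]] .
        then have 2: "le (g u) (g v)" unfolding g_def
          using jn_least[OF uA m'A jn_in[OF vA m'A]] jn_ub2[OF vA m'A] by blast
        show "le (f u) (f v) \<and> le (g u) (g v)" using 1 2 by blast
      qed
      have sep: "\<forall>u\<in>Y. \<forall>v\<in>Y. le u v \<and> u \<noteq> v \<longrightarrow> f u \<noteq> f v \<or> g u \<noteq> g v"
      proof (intro ballI impI)
        fix u v assume uv: "u \<in> Y" "v \<in> Y" "le u v \<and> u \<noteq> v"
        have uA: "u \<in> A" and vA: "v \<in> A" using uv YA by auto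
        show "f u \<noteq> f v \<or> g u \<noteq> g v"
        proof (rule ccontr)
          assume "\<not> ?thesis"
          then have e: "mt u m' = mt v m'" "jn u m' = jn v m'" unfolding f_def g_def by auto
          have eq: "mt (jn u m') v = jn u (mt m' v)" using lm_eq[OF lm' uA vA] uv(3) by blast
          have "mt (jn u m') v = v" unfolding e(2)
            using mt_comm[OF jn_in[OF vA m'A] vA] mt_absorb[OF vA jn_in[OF vA m'A] jn_ub1[OF vA m'A]] by simp
          moreover have "jn u (mt m' v) = u"
          proof -
            have "mt m' v = mt u m'" using mt_comm[OF m'A vA] e(1) by simp
            then show ?thesis
              using jn_comm[OF uA mt_in[OF uA m'A]] jn_absorb[OF mt_in[OF uA m'A] uA mt_lb1[OF uA m'A]] by simp
          qed
          ultimately show False using eq uv(3) by simp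
        qed
      qed
      have cnt: "card Y + 1 \<le> card (f ` Y) + card (g ` Y)"
        using count_lemma[OF finY Yne less.prems(2) fA gA mono sep] .
      have cf: "card (f ` Y) \<le> card S'"
      proof (rule IH)
        show "is_chain P (f ` Y)" unfolding is_chain_def
        proof (intro conjI ballI)
          show "f ` Y \<subseteq> A" using fA .
        next
          fix x y assume "x \<in> f ` Y" "y \<in> f ` Y"
          then obtain u v where "u \<in> Y" "v \<in> Y" "x = f u" "y = f v" by blast
          then show "le x y \<or> le y x" using mono chain_cmp[OF less.prems(2)] by metis
        qed
        show "\<forall>y\<in>f ` Y. le y m'" unfolding f_def using YA m'A mt_lb2 by blast
      qed
      have cg: "g ` Y \<subseteq> {m', m}"
      proof
        fix z assume "z \<in> g ` Y"
        then obtain y where y: "y \<in> Y" "z = jn y m'" unfolding g_def by blast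
        have yA: "y \<in> A" using y YA by blast
        have zA: "z \<in> A" using y jn_in[OF yA m'A] by simp
        have m'z: "le m' z" using y jn_ub2[OF yA m'A] by simp
        have zm: "le z m" using y jn_least[OF yA m'A mA] less.prems(3) m'm(1) by simp
        have "\<forall>x\<in>M. le x z \<or> le z x"
        proof
          fix x assume x: "x \<in> M"
          have xA: "x \<in> A" using x MA by blast
          show "le x z \<or> le z x"
          proof (cases "le x m'")
            case True
            then show ?thesis using trans[OF xA m'A zA True m'z] by blast
          next
            case False
            have "le x m \<or> le m x" using chain_cmp[OF cM x less.prems(1)] .
            then show ?thesis
            proof
              assume xm: "le x m"
              have "x = m" using xm False m'(2) B_def x by blast
              then show ?thesis using zm by blast
            next
              assume "le m x"
              then show ?thesis using trans[OF zA mA xA zm] by blast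
            qed
          qed
        qed
        then have zM: "z \<in> M" using maxch_add[OF M zA] by blast
        show "z \<in> {m', m}"
        proof (cases "z = m")
          case True then show ?thesis by simp
        next
          case False
          then have "z \<in> B" using zM zm B_def by blast
          then have "le z m'" using m'(2) by blast
          then show ?thesis using anti[OF zA m'A _ m'z] by simp
        qed
      qed
      have "card (g ` Y) \<le> card {m', m}" using cg by (simp add: card_mono)
      also have "\<dots> \<le> 2" by (simp add: card_insert_if)
      finally have "card (g ` Y) \<le> 2" .
      then show ?thesis using cnt cf cardS' unfolding S_def by linarith
    qed
  qed
qed

theorem T1:
  assumes M: "maximal_chain P M" and lm: "\<forall>a\<in>M. left_modular_elem P a" and T: "is_chain P T"
  shows "card T \<le> card M"
proof -
  obtain t where t: "t \<in> A" "\<forall>x\<in>A. le x t" using top_ex by blast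
  have cM: "is_chain P M" using M by (rule maxch_chain)
  have MA: "M \<subseteq> A" using cM by (rule chain_sub)
  have tM: "t \<in> M" using maxch_add[OF M t(1)] t(2) MA by blast
  have "card T \<le> card {x\<in>M. le x t}"
    using T1_aux[OF M lm tM T] t(2) chain_sub[OF T] by blast
  also have "{x\<in>M. le x t} = M" using t(2) MA by blast
  finally show ?thesis .
qed

end

definition maxc :: "'a poset \<Rightarrow> 'a set \<Rightarrow> bool" where
  "maxc P S \<longleftrightarrow> is_chain P S \<and> (\<forall>T. is_chain P T \<longrightarrow> card T \<le> card S)"

lemma spine_iff: "x \<in> spine P \<longleftrightarrow> (\<exists>S. maxc P S \<and> x \<in> S)"
  unfolding spine_def maxc_def by blast

context flat begin

lemma maxc_ex: "\<exists>S. maxc P S"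
proof -
  have "\<exists>S. is_chain P S \<and> (\<forall>T. is_chain P T \<longrightarrow> card T \<le> card S)"
  proof (rule ex_has_greatest_nat[where f=card and b="Suc (card A)"])
    show "is_chain P {}" unfolding is_chain_def by simp
    show "\<forall>T. is_chain P T \<longrightarrow> card T < Suc (card A)"
    proof (intro allI impI)
      fix T assume "is_chain P T"
      then have "T \<subseteq> A" by (rule chain_sub)
      then have "card T \<le> card A" by (rule card_mono[OF fin])
      then show "card T < Suc (card A)" by simp
    qed
  qed
  then show ?thesis unfolding maxc_def by blast
qed

lemma maxc_maximal: "maxc P S \<Longrightarrow> maximal_chain P S"
  unfolding maximal_chain_def
proof (intro conjI allI impI)
  assume m: "maxc P S"
  then show "is_chain P S" unfolding maxc_def by blast
  fix T assume T: "is_chain P T \<and> S \<subseteq> T"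
  have fT: "finite T" using T chain_fin by blast
  have "card T \<le> card S" using m T unfolding maxc_def by blast
  moreover have "card S \<le> card T" using card_mono[OF fT] T by blast
  ultimately show "T = S" using card_subset_eq[OF fT] T by (metis le_antisym)
qed

lemma maxc_intro: "is_chain P S \<Longrightarrow> \<forall>T. is_chain P T \<longrightarrow> card T \<le> card S \<Longrightarrow> maxc P S"
  unfolding maxc_def by blast

end

lemma leq_double: "leq (double P C) x y = (leq P (butlast x) (butlast y) \<and> (last x \<longrightarrow> last y))"
  unfolding double_def by (simp add: leq_def)

lemma carrier_double: "carrier (double P C) =
   (\<lambda>x. x @ [False]) ` down_of P C \<union> (\<lambda>x. x @ [True]) ` ((carrier P - down_of P C) \<union> C)"
  unfolding double_def by (simp add: carrier_def)

locale dbl = flat L for L :: "bool list poset" +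
  fixes a b :: "bool list"
  assumes aA: "a \<in> carrier L" and bA: "b \<in> carrier L" and ab: "leq L a b"
begin

definition "CC = {z\<in>A. le a z \<and> le z b}"
definition "L' = double L CC"
definition ok :: "bool list \<Rightarrow> bool \<Rightarrow> bool" where
  "ok x i \<longleftrightarrow> x \<in> A \<and> (if i then (le x b \<longrightarrow> le a x) else le x b)"

lemma down: "down_of L CC = {y\<in>A. le y b}"
proof
  show "down_of L CC \<subseteq> {y\<in>A. le y b}"
  proof
    fix y assume "y \<in> down_of L CC"
    then obtain x where "y \<in> A" "x \<in> A" "le y x" "le x b" unfolding down_of_def CC_def by blast
    then show "y \<in> {y\<in>A. le y b}" using trans[OF _ _ bA] by blast
  qed
  show "{y\<in>A. le y b} \<subseteq> down_of L CC"
    unfolding down_of_def CC_def using ab bA refl by blast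
qed

lemma img_snoc: "x @ [i] \<in> (\<lambda>x. x @ [j]) ` D \<longleftrightarrow> i = j \<and> x \<in> D"
  by auto

lemma carr: "x @ [i] \<in> carrier L' \<longleftrightarrow> ok x i"
proof -
  have "x @ [i] \<in> carrier L' \<longleftrightarrow> (\<not> i \<and> x \<in> {y\<in>A. le y b}) \<or> (i \<and> x \<in> (A - {y\<in>A. le y b}) \<union> CC)"
    unfolding L'_def carrier_double down Un_iff img_snoc by simp
  also have "\<dots> \<longleftrightarrow> ok x i" unfolding ok_def CC_def by auto
  finally show ?thesis .
qed

lemma carr_form: "z \<in> carrier L' \<Longrightarrow> \<exists>x i. z = x @ [i] \<and> ok x i"
proof -
  assume z: "z \<in> carrier L'"
  then have "\<exists>x i. z = x @ [i]" unfolding L'_def carrier_double by blast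
  then obtain x i where "z = x @ [i]" by blast
  then show ?thesis using z carr by blast
qed

lemma leq': "leq L' (x @ [i]) (y @ [j]) \<longleftrightarrow> le x y \<and> (i \<longrightarrow> j)"
  unfolding L'_def leq_double by simp

lemma ball': "(\<forall>w\<in>carrier L'. Q w) \<longleftrightarrow> (\<forall>u k. ok u k \<longrightarrow> Q (u @ [k]))"
proof
  assume "\<forall>w\<in>carrier L'. Q w"
  then show "\<forall>u k. ok u k \<longrightarrow> Q (u @ [k])" using carr by blast
next
  assume h: "\<forall>u k. ok u k \<longrightarrow> Q (u @ [k])"
  show "\<forall>w\<in>carrier L'. Q w"
  proof
    fix w assume "w \<in> carrier L'"
    then obtain u k where "w = u @ [k]" "ok u k" using carr_form by blast
    then show "Q w" using h by blast
  qed
qed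

lemma okA: "ok x i \<Longrightarrow> x \<in> A" unfolding ok_def by blast

lemma ok_jn: assumes "ok x i" "ok y j" shows "ok (jn x y) (i \<or> j)"
proof -
  have xA: "x \<in> A" and yA: "y \<in> A" using assms okA by auto
  have jA: "jn x y \<in> A" using jn_in[OF xA yA] .
  have u1: "le x (jn x y)" and u2: "le y (jn x y)" using jn_ub1[OF xA yA] jn_ub2[OF xA yA] .
  show ?thesis
  proof (cases "i \<or> j")
    case True
    have "le (jn x y) b \<Longrightarrow> le a (jn x y)"
    proof -
      assume jb: "le (jn x y) b"
      show "le a (jn x y)"
      proof (cases i)
        case True
        have "le x b" using trans[OF xA jA bA u1 jb] .
        then have "le a x" using assms(1) True unfolding ok_def by simp
        then show ?thesis using trans[OF aA xA jA _ u1] by simp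
      next
        case False
        then have j: j using \<open>i \<or> j\<close> by simp
        have "le y b" using trans[OF yA jA bA u2 jb] .
        then have "le a y" using assms(2) j unfolding ok_def by simp
        then show ?thesis using trans[OF aA yA jA _ u2] by simp
      qed
    qed
    then show ?thesis using True jA unfolding ok_def by simp
  next
    case False
    then have "le x b" "le y b" using assms unfolding ok_def by auto
    then show ?thesis using False jA jn_least[OF xA yA bA] unfolding ok_def by simp
  qed
qed

definition ml :: "bool list \<Rightarrow> bool \<Rightarrow> bool list \<Rightarrow> bool \<Rightarrow> bool" where
  "ml x i y j \<longleftrightarrow> i \<and> j \<and> (le (mt x y) b \<longrightarrow> le a (mt x y))"

lemma ok_mt: assumes "ok x i" "ok y j" shows "ok (mt x y) (ml x i y j)"
proof -
  have xA: "x \<in> A" and yA: "y \<in> A" using assms okA by auto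
  have mA: "mt x y \<in> A" using mt_in[OF xA yA] .
  have l1: "le (mt x y) x" and l2: "le (mt x y) y" using mt_lb1[OF xA yA] mt_lb2[OF xA yA] .
  show ?thesis
  proof (cases "ml x i y j")
    case True
    then show ?thesis using mA unfolding ok_def ml_def by simp
  next
    case False
    have "le (mt x y) b"
    proof (cases i)
      case False
      then have "le x b" using assms(1) unfolding ok_def by simp
      then show ?thesis using trans[OF mA xA bA l1] by simp
    next
      case True
      show ?thesis
      proof (cases j)
        case False
        then have "le y b" using assms(2) unfolding ok_def by simp
        then show ?thesis using trans[OF mA yA bA l2] by simp
      next
        case True
        then show ?thesis using \<open>i\<close> \<open>\<not> ml x i y j\<close> unfolding ml_def by blast
      qed
    qed
    then show ?thesis using False mA unfolding ok_def by simp
  qed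
qed

lemma jn_lub': assumes "ok x i" "ok y j"
  shows "\<forall>w\<in>carrier L'. leq L' (x@[i]) w \<and> leq L' (y@[j]) w \<longrightarrow> leq L' (jn x y @ [i \<or> j]) w"
  unfolding ball' leq'
proof (intro allI impI)
  fix u k assume uk: "ok u k" "(le x u \<and> (i \<longrightarrow> k)) \<and> le y u \<and> (j \<longrightarrow> k)"
  have "le (jn x y) u" using jn_least[OF okA[OF assms(1)] okA[OF assms(2)] okA[OF uk(1)]] uk(2) by blast
  then show "le (jn x y) u \<and> (i \<or> j \<longrightarrow> k)" using uk(2) by blast
qed

lemma mt_glb': assumes "ok x i" "ok y j"
  shows "\<forall>w\<in>carrier L'. leq L' w (x@[i]) \<and> leq L' w (y@[j]) \<longrightarrow> leq L' w (mt x y @ [ml x i y j])"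
  unfolding ball' leq'
proof (intro allI impI)
  fix u k assume uk: "ok u k" "(le u x \<and> (k \<longrightarrow> i)) \<and> le u y \<and> (k \<longrightarrow> j)"
  have xA: "x \<in> A" and yA: "y \<in> A" and uA: "u \<in> A" using assms uk okA by auto
  have mA: "mt x y \<in> A" using mt_in[OF xA yA] .
  have um: "le u (mt x y)" using mt_greatest[OF xA yA uA] uk(2) by blast
  have "k \<longrightarrow> ml x i y j"
  proof
    assume k: k
    have "le (mt x y) b \<Longrightarrow> le a (mt x y)"
    proof -
      assume "le (mt x y) b"
      then have "le u b" using trans[OF uA mA bA um] by simp
      then have "le a u" using uk(1) k unfolding ok_def by simp
      then show "le a (mt x y)" using trans[OF aA uA mA _ um] by simp
    qed
    then show "ml x i y j" unfolding ml_def using k uk(2) by blast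
  qed
  then show "le u (mt x y) \<and> (k \<longrightarrow> ml x i y j)" using um by blast
qed

lemma anti': "u \<in> carrier L' \<Longrightarrow> v \<in> carrier L' \<Longrightarrow> leq L' u v \<Longrightarrow> leq L' v u \<Longrightarrow> u = v"
proof -
  assume u: "u \<in> carrier L'" and v: "v \<in> carrier L'" and uv: "leq L' u v" and vu: "leq L' v u"
  obtain x i where x: "u = x @ [i]" "ok x i" using carr_form[OF u] by blast
  obtain y j where y: "v = y @ [j]" "ok y j" using carr_form[OF v] by blast
  have "le x y" "le y x" "i = j" using uv vu unfolding x y leq' by auto
  then show "u = v" using anti[OF okA[OF x(2)] okA[OF y(2)]] x y by simp
qed

lemma join': assumes "ok x i" "ok y j" shows "pjoin L' (x@[i]) (y@[j]) = jn x y @ [i \<or> j]"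
proof (rule pjoin_eqI)
  show "\<And>u v. u \<in> carrier L' \<Longrightarrow> v \<in> carrier L' \<Longrightarrow> leq L' u v \<Longrightarrow> leq L' v u \<Longrightarrow> u = v"
    by (rule anti')
  show "jn x y @ [i \<or> j] \<in> carrier L'" using carr ok_jn[OF assms] by blast
  show "leq L' (x @ [i]) (jn x y @ [i \<or> j])" unfolding leq'
    using jn_ub1[OF okA[OF assms(1)] okA[OF assms(2)]] by simp
  show "leq L' (y @ [j]) (jn x y @ [i \<or> j])" unfolding leq'
    using jn_ub2[OF okA[OF assms(1)] okA[OF assms(2)]] by simp
  show "\<forall>w\<in>carrier L'. leq L' (x @ [i]) w \<and> leq L' (y @ [j]) w \<longrightarrow> leq L' (jn x y @ [i \<or> j]) w"
    using jn_lub'[OF assms] .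
qed

lemma meet': assumes "ok x i" "ok y j" shows "pmeet L' (x@[i]) (y@[j]) = mt x y @ [ml x i y j]"
proof (rule pmeet_eqI)
  show "\<And>u v. u \<in> carrier L' \<Longrightarrow> v \<in> carrier L' \<Longrightarrow> leq L' u v \<Longrightarrow> leq L' v u \<Longrightarrow> u = v"
    by (rule anti')
  show "mt x y @ [ml x i y j] \<in> carrier L'" using carr ok_mt[OF assms] by blast
  show "leq L' (mt x y @ [ml x i y j]) (x @ [i])" unfolding leq' ml_def
    using mt_lb1[OF okA[OF assms(1)] okA[OF assms(2)]] by simp
  show "leq L' (mt x y @ [ml x i y j]) (y @ [j])" unfolding leq' ml_def
    using mt_lb2[OF okA[OF assms(1)] okA[OF assms(2)]] by simp
  show "\<forall>w\<in>carrier L'. leq L' w (x @ [i]) \<and> leq L' w (y @ [j]) \<longrightarrow> leq L' w (mt x y @ [ml x i y j])"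
    using mt_glb'[OF assms] .
qed

lemma fin': "finite (carrier L')"
proof -
  have "carrier L' \<subseteq> (\<lambda>(x, i). x @ [i]) ` (A \<times> UNIV)"
  proof
    fix z assume "z \<in> carrier L'"
    then obtain x i where "z = x @ [i]" "ok x i" using carr_form by blast
    then show "z \<in> (\<lambda>(x, i). x @ [i]) ` (A \<times> UNIV)" using okA by force
  qed
  moreover have "finite ((\<lambda>(x, i). x @ [i]) ` (A \<times> (UNIV :: bool set)))" using fin by simp
  ultimately show ?thesis by (rule finite_subset)
qed

lemma flat': "flat L'"
proof
  show "finite (carrier L')" by (rule fin')
  have "ok a False" unfolding ok_def using ab aA by simp
  then show "carrier L' \<noteq> {}" using carr by blast
  fix x y z
  show "x \<in> carrier L' \<Longrightarrow> leq L' x x"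
  proof -
    assume u: "x \<in> carrier L'"
    obtain x1 i where x1: "x = x1 @ [i]" "ok x1 i" using carr_form[OF u] by blast
    show ?thesis unfolding x1 leq' using refl[OF okA[OF x1(2)]] by simp
  qed
  show "x \<in> carrier L' \<Longrightarrow> y \<in> carrier L' \<Longrightarrow> leq L' x y \<Longrightarrow> leq L' y x \<Longrightarrow> x = y"
    by (rule anti')
  show "x \<in> carrier L' \<Longrightarrow> y \<in> carrier L' \<Longrightarrow> z \<in> carrier L' \<Longrightarrow> leq L' x y \<Longrightarrow> leq L' y z \<Longrightarrow> leq L' x z"
  proof -
    assume u: "x \<in> carrier L'" and v: "y \<in> carrier L'" and w: "z \<in> carrier L'" and h: "leq L' x y" "leq L' y z"
    obtain x1 i where x1: "x = x1 @ [i]" "ok x1 i" using carr_form[OF u] by blast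
    obtain y1 j where y1: "y = y1 @ [j]" "ok y1 j" using carr_form[OF v] by blast
    obtain z1 k where z1: "z = z1 @ [k]" "ok z1 k" using carr_form[OF w] by blast
    have "le x1 y1" "le y1 z1" "i \<longrightarrow> j" "j \<longrightarrow> k" using h unfolding x1 y1 z1 leq' by auto
    then show ?thesis unfolding x1 z1 leq' using trans[OF okA[OF x1(2)] okA[OF y1(2)] okA[OF z1(2)]] by blast
  qed
  show "x \<in> carrier L' \<Longrightarrow> y \<in> carrier L' \<Longrightarrow> \<exists>z\<in>carrier L'. leq L' x z \<and> leq L' y z \<and> (\<forall>w\<in>carrier L'. leq L' x w \<and> leq L' y w \<longrightarrow> leq L' z w)"
  proof -
    assume u: "x \<in> carrier L'" and v: "y \<in> carrier L'"
    obtain x1 i where x1: "x = x1 @ [i]" "ok x1 i" using carr_form[OF u] by blast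
    obtain y1 j where y1: "y = y1 @ [j]" "ok y1 j" using carr_form[OF v] by blast
    have 1: "jn x1 y1 @ [i \<or> j] \<in> carrier L'" using carr ok_jn[OF x1(2) y1(2)] by blast
    have 2: "leq L' x (jn x1 y1 @ [i \<or> j])" unfolding x1 leq'
      using jn_ub1[OF okA[OF x1(2)] okA[OF y1(2)]] by simp
    have 3: "leq L' y (jn x1 y1 @ [i \<or> j])" unfolding y1 leq'
      using jn_ub2[OF okA[OF x1(2)] okA[OF y1(2)]] by simp
    show ?thesis using 1 2 3 jn_lub'[OF x1(2) y1(2)] unfolding x1 y1 by blast
  qed
  show "x \<in> carrier L' \<Longrightarrow> y \<in> carrier L' \<Longrightarrow> \<exists>z\<in>carrier L'. leq L' z x \<and> leq L' z y \<and> (\<forall>w\<in>carrier L'. leq L' w x \<and> leq L' w y \<longrightarrow> leq L' w z)"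
  proof -
    assume u: "x \<in> carrier L'" and v: "y \<in> carrier L'"
    obtain x1 i where x1: "x = x1 @ [i]" "ok x1 i" using carr_form[OF u] by blast
    obtain y1 j where y1: "y = y1 @ [j]" "ok y1 j" using carr_form[OF v] by blast
    have 1: "mt x1 y1 @ [ml x1 i y1 j] \<in> carrier L'" using carr ok_mt[OF x1(2) y1(2)] by blast
    have 2: "leq L' (mt x1 y1 @ [ml x1 i y1 j]) x" unfolding x1 leq' ml_def
      using mt_lb1[OF okA[OF x1(2)] okA[OF y1(2)]] by simp
    have 3: "leq L' (mt x1 y1 @ [ml x1 i y1 j]) y" unfolding y1 leq' ml_def
      using mt_lb2[OF okA[OF x1(2)] okA[OF y1(2)]] by simp
    show ?thesis using 1 2 3 mt_glb'[OF x1(2) y1(2)] unfolding x1 y1 by blast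
  qed
qed

end

context dbl begin

lemma okF: "ok x False \<longleftrightarrow> x \<in> A \<and> le x b" unfolding ok_def by simp
lemma okT: "ok x True \<longleftrightarrow> x \<in> A \<and> (le x b \<longrightarrow> le a x)" unfolding ok_def by simp

lemma ml_F1: "ml x False y j = False" unfolding ml_def by simp

lemma LM0:
  assumes mA: "m \<in> A" and mb: "le m b" and lm: "left_modular_elem L m"
  shows "left_modular_elem L' (m @ [False])"
  unfolding left_modular_elem_def
proof (intro conjI)
  have okm: "ok m False" using mA mb okF by simp
  then show "m @ [False] \<in> carrier L'" using carr by blast
  show "\<forall>p'\<in>carrier L'. \<forall>q'\<in>carrier L'. leq L' p' q' \<and> p' \<noteq> q' \<longrightarrow>
        pmeet L' (pjoin L' p' (m @ [False])) q' = pjoin L' p' (pmeet L' (m @ [False]) q')"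
    unfolding ball'
  proof (intro allI impI)
    fix p i q j assume okp: "ok p i" and okq: "ok q j" and h: "leq L' (p @ [i]) (q @ [j]) \<and> p @ [i] \<noteq> q @ [j]"
    have pA: "p \<in> A" and qA: "q \<in> A" using okp okq okA by auto
    have pq: "le p q" and ij: "i \<longrightarrow> j" using h leq' by auto
    have j1: "pjoin L' (p @ [i]) (m @ [False]) = jn p m @ [i]" using join'[OF okp okm] by simp
    have okj: "ok (jn p m) i" using ok_jn[OF okp okm] by simp
    have m1: "pmeet L' (jn p m @ [i]) (q @ [j]) = mt (jn p m) q @ [ml (jn p m) i q j]" using meet'[OF okj okq] .
    have m2: "pmeet L' (m @ [False]) (q @ [j]) = mt m q @ [False]" using meet'[OF okm okq] ml_F1 by simp
    have okm2: "ok (mt m q) False" using ok_mt[OF okm okq] ml_F1 by simp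
    have j2: "pjoin L' (p @ [i]) (mt m q @ [False]) = jn p (mt m q) @ [i]" using join'[OF okp okm2] by simp
    have eq: "mt (jn p m) q = jn p (mt m q)" using lm_eq[OF lm pA qA pq] .
    have lvl: "ml (jn p m) i q j = i"
    proof (cases i)
      case False then show ?thesis unfolding ml_def by simp
    next
      case True
      have zA: "jn p (mt m q) \<in> A" using jn_in[OF pA mt_in[OF mA qA]] .
      have pz: "le p (jn p (mt m q))" using jn_ub1[OF pA mt_in[OF mA qA]] .
      have "le (mt (jn p m) q) b \<longrightarrow> le a (mt (jn p m) q)"
      proof
        assume "le (mt (jn p m) q) b"
        then have zb: "le (jn p (mt m q)) b" using eq by simp
        then have "le p b" using trans[OF pA zA bA pz] by simp
        then have "le a p" using okp True okT by simp
        then show "le a (mt (jn p m) q)" using trans[OF aA pA zA _ pz] eq by simp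
      qed
      then show ?thesis unfolding ml_def using True ij by simp
    qed
    show "pmeet L' (pjoin L' (p @ [i]) (m @ [False])) (q @ [j]) = pjoin L' (p @ [i]) (pmeet L' (m @ [False]) (q @ [j]))"
      unfolding j1 m1 m2 j2 eq lvl ..
  qed
qed

lemma LM1:
  assumes mA: "m \<in> A" and am: "le a m" and lm: "left_modular_elem L m"
  shows "left_modular_elem L' (m @ [True])"
  unfolding left_modular_elem_def
proof (intro conjI)
  have okm: "ok m True" using mA am okT by simp
  then show "m @ [True] \<in> carrier L'" using carr by blast
  show "\<forall>p'\<in>carrier L'. \<forall>q'\<in>carrier L'. leq L' p' q' \<and> p' \<noteq> q' \<longrightarrow>
        pmeet L' (pjoin L' p' (m @ [True])) q' = pjoin L' p' (pmeet L' (m @ [True]) q')"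
    unfolding ball'
  proof (intro allI impI)
    fix p i q j assume okp: "ok p i" and okq: "ok q j" and h: "leq L' (p @ [i]) (q @ [j]) \<and> p @ [i] \<noteq> q @ [j]"
    have pA: "p \<in> A" and qA: "q \<in> A" using okp okq okA by auto
    have pq: "le p q" and ij: "i \<longrightarrow> j" using h leq' by auto
    have j1: "pjoin L' (p @ [i]) (m @ [True]) = jn p m @ [True]" using join'[OF okp okm] by simp
    have okj: "ok (jn p m) True" using ok_jn[OF okp okm] by simp
    have m1: "pmeet L' (jn p m @ [True]) (q @ [j]) = mt (jn p m) q @ [ml (jn p m) True q j]" using meet'[OF okj okq] .
    have m2: "pmeet L' (m @ [True]) (q @ [j]) = mt m q @ [ml m True q j]" using meet'[OF okm okq] by simp
    have okm2: "ok (mt m q) (ml m True q j)" using ok_mt[OF okm okq] by simp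
    have j2: "pjoin L' (p @ [i]) (mt m q @ [ml m True q j]) = jn p (mt m q) @ [i \<or> ml m True q j]"
      using join'[OF okp okm2] by simp
    have eq: "mt (jn p m) q = jn p (mt m q)" using lm_eq[OF lm pA qA pq] .
    define w where "w = mt m q"
    define z where "z = jn p w"
    have wA: "w \<in> A" using mt_in[OF mA qA] w_def by simp
    have zA: "z \<in> A" using jn_in[OF pA wA] z_def by simp
    have pz: "le p z" using jn_ub1[OF pA wA] z_def by simp
    have wz: "le w z" using jn_ub2[OF pA wA] z_def by simp
    have wq: "le w q" using mt_lb2[OF mA qA] w_def by simp
    have zq: "le z q" using jn_least[OF pA wA qA pq wq] z_def by simp
    have lvl: "ml (jn p m) True q j = (i \<or> ml m True q j)"
    proof -
      have L: "ml (jn p m) True q j = (j \<and> (le z b \<longrightarrow> le a z))" unfolding ml_def eq z_def w_def by simp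
      have R: "ml m True q j = (j \<and> (le w b \<longrightarrow> le a w))" unfolding ml_def w_def by simp
      have "(j \<and> (le z b \<longrightarrow> le a z)) = (i \<or> (j \<and> (le w b \<longrightarrow> le a w)))"
      proof
        assume H: "j \<and> (le z b \<longrightarrow> le a z)"
        show "i \<or> (j \<and> (le w b \<longrightarrow> le a w))"
        proof (cases i)
          case True then show ?thesis by simp
        next
          case False
          have "le w b \<longrightarrow> le a w"
          proof
            assume wb: "le w b"
            have pb: "le p b" using okp False okF by simp
            have "le z b" using jn_least[OF pA wA bA pb wb] z_def by simp
            then have az: "le a z" using H by simp
            have "le a q" using trans[OF aA zA qA az zq] .
            then show "le a w" using mt_greatest[OF mA qA aA am] w_def by simp
          qed
          then show ?thesis using H by simp
        qed
      next
        assume H: "i \<or> (j \<and> (le w b \<longrightarrow> le a w))"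
        show "j \<and> (le z b \<longrightarrow> le a z)"
        proof (cases i)
          case True
          have "le z b \<longrightarrow> le a z"
          proof
            assume zb: "le z b"
            have "le p b" using trans[OF pA zA bA pz zb] .
            then have "le a p" using okp True okT by simp
            then show "le a z" using trans[OF aA pA zA _ pz] by simp
          qed
          then show ?thesis using True ij by simp
        next
          case False
          then have jj: j and ww: "le w b \<longrightarrow> le a w" using H by auto
          have "le z b \<longrightarrow> le a z"
          proof
            assume zb: "le z b"
            have "le w b" using trans[OF wA zA bA wz zb] .
            then have "le a w" using ww by simp
            then show "le a z" using trans[OF aA wA zA _ wz] by simp
          qed
          then show ?thesis using jj by simp
        qed
      qed
      then show ?thesis using L R by simp
    qed
    show "pmeet L' (pjoin L' (p @ [i]) (m @ [True])) (q @ [j]) = pjoin L' (p @ [i]) (pmeet L' (m @ [True]) (q @ [j]))"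
      unfolding j1 m1 m2 j2 eq lvl ..
  qed
qed

lemma LMdown:
  assumes okm: "ok m k" and lm: "left_modular_elem L' (m @ [k])"
  shows "left_modular_elem L m"
  unfolding left_modular_elem_def
proof (intro conjI ballI impI)
  show mA: "m \<in> A" using okm okA by blast
  fix p q assume pA: "p \<in> A" and qA: "q \<in> A" and h: "le p q \<and> p \<noteq> q"
  define i where "i = (\<not> le p b)"
  define j where "j = (le q b \<longrightarrow> le a q)"
  have okp: "ok p i" unfolding ok_def i_def using pA by auto
  have okq: "ok q j" unfolding ok_def j_def using qA by auto
  have ij: "i \<longrightarrow> j"
  proof
    assume i
    then have "\<not> le q b" using trans[OF pA qA bA] h i_def by blast
    then show j unfolding j_def by simp
  qed
  have le': "leq L' (p @ [i]) (q @ [j])" using leq' h ij by simp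
  have ne': "p @ [i] \<noteq> q @ [j]" using h by simp
  have pc: "p @ [i] \<in> carrier L'" "q @ [j] \<in> carrier L'" using okp okq carr by auto
  have E: "pmeet L' (pjoin L' (p @ [i]) (m @ [k])) (q @ [j]) = pjoin L' (p @ [i]) (pmeet L' (m @ [k]) (q @ [j]))"
    using lm pc le' ne' unfolding left_modular_elem_def by blast
  have okj: "ok (jn p m) (i \<or> k)" using ok_jn[OF okp okm] .
  have okmt: "ok (mt m q) (ml m k q j)" using ok_mt[OF okm okq] .
  have "mt (jn p m) q @ [ml (jn p m) (i \<or> k) q j] = jn p (mt m q) @ [i \<or> ml m k q j]"
    using E unfolding join'[OF okp okm] meet'[OF okj okq] meet'[OF okm okq] join'[OF okp okmt] .
  then show "mt (jn p m) q = jn p (mt m q)" by simp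
qed

end

context dbl begin

lemma chain_proj:
  assumes S: "is_chain L' S"
  shows "is_chain L (butlast ` S)"
  unfolding is_chain_def
proof (intro conjI ballI)
  have SC: "S \<subseteq> carrier L'" using S unfolding is_chain_def by blast
  show "butlast ` S \<subseteq> A"
  proof
    fix x assume "x \<in> butlast ` S"
    then obtain z where z: "z \<in> S" "x = butlast z" by blast
    obtain y i where "z = y @ [i]" "ok y i" using carr_form z(1) SC by blast
    then show "x \<in> A" using z okA by simp
  qed
  fix x y assume "x \<in> butlast ` S" "y \<in> butlast ` S"
  then obtain z1 z2 where z: "z1 \<in> S" "x = butlast z1" "z2 \<in> S" "y = butlast z2" by blast
  obtain x1 i where x1: "z1 = x1 @ [i]" using carr_form z(1) SC by blast
  obtain y1 j where y1: "z2 = y1 @ [j]" using carr_form z(3) SC by blast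
  have "leq L' z1 z2 \<or> leq L' z2 z1" using S z unfolding is_chain_def by blast
  then show "le x y \<or> le y x" using z x1 y1 leq' by auto
qed

lemma doubled_unique:
  assumes S: "is_chain L' S" and x: "x @ [False] \<in> S" "x @ [True] \<in> S" and y: "y @ [False] \<in> S" "y @ [True] \<in> S"
  shows "x = y"
proof -
  have SC: "S \<subseteq> carrier L'" using S unfolding is_chain_def by blast
  have xA: "x \<in> A" and yA: "y \<in> A" using x y SC carr okA by blast+
  have "leq L' (x @ [True]) (y @ [False]) \<or> leq L' (y @ [False]) (x @ [True])" using S x y unfolding is_chain_def by blast
  then have "le y x" using leq' by simp
  moreover have "leq L' (y @ [True]) (x @ [False]) \<or> leq L' (x @ [False]) (y @ [True])" using S x y unfolding is_chain_def by blast
  then have "le x y" using leq' by simp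
  ultimately show ?thesis using anti[OF xA yA] by simp
qed

lemma card_proj_nodbl:
  assumes S: "is_chain L' S" and nd: "\<not> (\<exists>x. x @ [False] \<in> S \<and> x @ [True] \<in> S)"
  shows "card S = card (butlast ` S)"
proof -
  have SC: "S \<subseteq> carrier L'" using S unfolding is_chain_def by blast
  have "inj_on butlast S"
  proof
    fix z1 z2 assume z: "z1 \<in> S" "z2 \<in> S" "butlast z1 = butlast z2"
    obtain x1 i where x1: "z1 = x1 @ [i]" using carr_form z(1) SC by blast
    obtain y1 j where y1: "z2 = y1 @ [j]" using carr_form z(2) SC by blast
    have xy: "x1 = y1" using z x1 y1 by simp
    show "z1 = z2"
    proof (rule ccontr)
      assume "z1 \<noteq> z2"
      then have "i \<noteq> j" using x1 y1 xy by simp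
      then have "x1 @ [False] \<in> S \<and> x1 @ [True] \<in> S" using z x1 y1 xy by (cases i) auto
      then show False using nd by blast
    qed
  qed
  then show ?thesis by (simp add: card_image)
qed

lemma card_proj:
  assumes S: "is_chain L' S"
  shows "card S \<le> card (butlast ` S) + 1"
proof (cases "\<exists>x. x @ [False] \<in> S \<and> x @ [True] \<in> S")
  case False
  then show ?thesis using card_proj_nodbl[OF S] by simp
next
  case True
  then obtain x where x: "x @ [False] \<in> S" "x @ [True] \<in> S" by blast
  have SC: "S \<subseteq> carrier L'" using S unfolding is_chain_def by blast
  have finS: "finite S" using SC fin' finite_subset by blast
  define S0 where "S0 = S - {x @ [True]}"
  have "inj_on butlast S0"
  proof
    fix z1 z2 assume z: "z1 \<in> S0" "z2 \<in> S0" "butlast z1 = butlast z2"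
    obtain x1 i where x1: "z1 = x1 @ [i]" using carr_form z(1) SC S0_def by blast
    obtain y1 j where y1: "z2 = y1 @ [j]" using carr_form z(2) SC S0_def by blast
    have xy: "x1 = y1" using z x1 y1 by simp
    show "z1 = z2"
    proof (rule ccontr)
      assume "z1 \<noteq> z2"
      then have "i \<noteq> j" using x1 y1 xy by simp
      then have d: "x1 @ [False] \<in> S \<and> x1 @ [True] \<in> S" using z x1 y1 xy S0_def by (cases i) auto
      then have "x1 = x" using doubled_unique[OF S _ _ x] by blast
      then show False using z x1 y1 xy S0_def \<open>i \<noteq> j\<close> by (cases i) auto
    qed
  qed
  then have "card S0 = card (butlast ` S0)" by (simp add: card_image)
  also have "\<dots> \<le> card (butlast ` S)" using finS S0_def by (intro card_mono) auto
  finally have "card S0 \<le> card (butlast ` S)" .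
  moreover have "card S > 0" using finS x(2) card_gt_0_iff by blast
  then have "card S = card S0 + 1" using finS x(2) S0_def
    by (simp add: card_Diff_singleton)
  ultimately show ?thesis by simp
qed

lemma lift_chain:
  assumes T: "is_chain L T"
  shows "is_chain L' ((\<lambda>t. t @ [\<not> le t b]) ` T) \<and> card ((\<lambda>t. t @ [\<not> le t b]) ` T) = card T"
proof
  have TA: "T \<subseteq> A" using T chain_sub by blast
  show "is_chain L' ((\<lambda>t. t @ [\<not> le t b]) ` T)"
    unfolding is_chain_def
  proof (intro conjI ballI)
    show "(\<lambda>t. t @ [\<not> le t b]) ` T \<subseteq> carrier L'"
    proof
      fix z assume "z \<in> (\<lambda>t. t @ [\<not> le t b]) ` T"
      then obtain t where t: "t \<in> T" "z = t @ [\<not> le t b]" by blast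
      have "ok t (\<not> le t b)" unfolding ok_def using t TA by auto
      then show "z \<in> carrier L'" using t carr by simp
    qed
    fix x y assume "x \<in> (\<lambda>t. t @ [\<not> le t b]) ` T" "y \<in> (\<lambda>t. t @ [\<not> le t b]) ` T"
    then obtain s t where st: "s \<in> T" "x = s @ [\<not> le s b]" "t \<in> T" "y = t @ [\<not> le t b]" by blast
    have sA: "s \<in> A" and tA: "t \<in> A" using st TA by auto
    have "le s t \<or> le t s" using chain_cmp[OF T st(1) st(3)] .
    then show "leq L' x y \<or> leq L' y x"
    proof
      assume h: "le s t"
      have "le t b \<longrightarrow> le s b" using trans[OF sA tA bA h] by blast
      then show ?thesis using h st leq' by auto
    next
      assume h: "le t s"
      have "le s b \<longrightarrow> le t b" using trans[OF tA sA bA h] by blast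
      then show ?thesis using h st leq' by auto
    qed
  qed
  have "inj_on (\<lambda>t. t @ [\<not> le t b]) T" by (rule inj_onI) simp
  then show "card ((\<lambda>t. t @ [\<not> le t b]) ` T) = card T" by (simp add: card_image)
qed

lemma lift_w:
  assumes S: "is_chain L S" and wS: "w \<in> S" and wC: "w \<in> CC"
  defines "S2 \<equiv> insert (w @ [True]) ((\<lambda>t. t @ [\<not> le t w]) ` S)"
  shows "is_chain L' S2" "card S2 = card S + 1"
    "\<forall>t\<in>S. left_modular_elem L t \<Longrightarrow> \<forall>z\<in>S2. left_modular_elem L' z"
proof -
  have SA: "S \<subseteq> A" using S chain_sub by blast
  have finS: "finite S" using S chain_fin by blast
  have wA: "w \<in> A" and aw: "le a w" and wb: "le w b" using wC CC_def by auto
  have okt: "\<And>t. t \<in> S \<Longrightarrow> ok t (\<not> le t w)"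
  proof -
    fix t assume t: "t \<in> S"
    have tA: "t \<in> A" using t SA by blast
    show "ok t (\<not> le t w)"
    proof (cases "le t w")
      case True
      then show ?thesis using trans[OF tA wA bA True wb] tA okF by simp
    next
      case False
      then have "le w t" using chain_cmp[OF S t wS] by blast
      then have "le a t" using trans[OF aA wA tA aw] by simp
      then show ?thesis using False tA okT by simp
    qed
  qed
  have okw: "ok w True" using okT wA aw by simp
  show "is_chain L' S2"
    unfolding is_chain_def
  proof (intro conjI ballI)
    show "S2 \<subseteq> carrier L'" unfolding S2_def using okt okw carr by auto
    fix x y assume "x \<in> S2" "y \<in> S2"
    have cmp1: "\<And>t. t \<in> S \<Longrightarrow> leq L' (t @ [\<not> le t w]) (w @ [True]) \<or> leq L' (w @ [True]) (t @ [\<not> le t w])"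
    proof -
      fix t assume t: "t \<in> S"
      show "leq L' (t @ [\<not> le t w]) (w @ [True]) \<or> leq L' (w @ [True]) (t @ [\<not> le t w])"
      proof (cases "le t w")
        case True then show ?thesis using leq' by simp
      next
        case False
        then have "le w t" using chain_cmp[OF S t wS] by blast
        then show ?thesis using False leq' by simp
      qed
    qed
    have cmp2: "\<And>s t. s \<in> S \<Longrightarrow> t \<in> S \<Longrightarrow> leq L' (s @ [\<not> le s w]) (t @ [\<not> le t w]) \<or> leq L' (t @ [\<not> le t w]) (s @ [\<not> le s w])"
    proof -
      fix s t assume st: "s \<in> S" "t \<in> S"
      have sA: "s \<in> A" and tA: "t \<in> A" using st SA by auto
      have "le s t \<or> le t s" using chain_cmp[OF S st] .
      then show "leq L' (s @ [\<not> le s w]) (t @ [\<not> le t w]) \<or> leq L' (t @ [\<not> le t w]) (s @ [\<not> le s w])"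
      proof
        assume h: "le s t"
        have "le t w \<longrightarrow> le s w" using trans[OF sA tA wA h] by blast
        then show ?thesis using h leq' by auto
      next
        assume h: "le t s"
        have "le s w \<longrightarrow> le t w" using trans[OF tA sA wA h] by blast
        then show ?thesis using h leq' by auto
      qed
    qed
    have rw: "leq L' (w @ [True]) (w @ [True])" using leq' refl[OF wA] by simp
    show "leq L' x y \<or> leq L' y x"
      using \<open>x \<in> S2\<close> \<open>y \<in> S2\<close> cmp1 cmp2 rw unfolding S2_def by blast
  qed
  have inj: "inj_on (\<lambda>t. t @ [\<not> le t w]) S" by (rule inj_onI) simp
  have notin: "w @ [True] \<notin> (\<lambda>t. t @ [\<not> le t w]) ` S" using refl[OF wA] by auto
  show "card S2 = card S + 1" unfolding S2_def using notin finS inj by (simp add: card_image)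
  assume lmS: "\<forall>t\<in>S. left_modular_elem L t"
  show "\<forall>z\<in>S2. left_modular_elem L' z"
  proof
    fix z assume "z \<in> S2"
    then consider "z = w @ [True]" | t where "t \<in> S" "z = t @ [\<not> le t w]" unfolding S2_def by blast
    then show "left_modular_elem L' z"
    proof cases
      case 1 then show ?thesis using LM1[OF wA aw] lmS wS by simp
    next
      case (2 t)
      have tA: "t \<in> A" using 2 SA by blast
      show ?thesis
      proof (cases "le t w")
        case True
        then show ?thesis using 2 LM0[OF tA trans[OF tA wA bA True wb]] lmS by simp
      next
        case False
        then have "le w t" using chain_cmp[OF S 2(1) wS] by blast
        then have "le a t" using trans[OF aA wA tA aw] by simp
        then show ?thesis using 2 LM1[OF tA] lmS False by simp
      qed
    qed
  qed
qed

end

context dbl begin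

lemma maxc_sub_spine: "maxc P S \<Longrightarrow> S \<subseteq> spine P" unfolding spine_def maxc_def by blast

lemma S23:
  assumes sp: "spine L \<subseteq> {m. left_modular_elem L m}" and w: "w \<in> CC" "w \<in> spine L"
  shows "left_modular L' \<and> spine L' \<subseteq> {m. left_modular_elem L' m}"
proof -
  interpret L2: flat L' by (rule flat')
  obtain S where S: "maxc L S" "w \<in> S" using w(2) unfolding spine_iff by blast
  have cS: "is_chain L S" using S(1) unfolding maxc_def by blast
  have lmS: "\<forall>t\<in>S. left_modular_elem L t" using maxc_sub_spine[OF S(1)] sp by blast
  define S2 where "S2 = insert (w @ [True]) ((\<lambda>t. t @ [\<not> le t w]) ` S)"
  have cS2: "is_chain L' S2" and cardS2: "card S2 = card S + 1"
    using lift_w(1,2)[OF cS S(2) w(1)] unfolding S2_def by simp_all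
  have lmS2: "\<forall>z\<in>S2. left_modular_elem L' z"
    using lift_w(3)[OF cS S(2) w(1) lmS] unfolding S2_def by simp
  have bound: "\<And>T'. is_chain L' T' \<Longrightarrow> card T' \<le> card S + 1"
  proof -
    fix T' assume T': "is_chain L' T'"
    have "card (butlast ` T') \<le> card S" using S(1) chain_proj[OF T'] unfolding maxc_def by blast
    then show "card T' \<le> card S + 1" using card_proj[OF T'] by simp
  qed
  have mS2: "maxc L' S2" unfolding maxc_def
  proof (intro conjI allI impI)
    show "is_chain L' S2" using cS2 .
    fix T assume "is_chain L' T"
    then show "card T \<le> card S2" using bound cardS2 by simp
  qed
  have lm: "left_modular L'" unfolding left_modular_def using L2.maxc_maximal[OF mS2] lmS2 by blast
  have "spine L' \<subseteq> {m. left_modular_elem L' m}"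
  proof
    fix z assume "z \<in> spine L'"
    then obtain S' where S': "maxc L' S'" "z \<in> S'" unfolding spine_iff by blast
    have cS': "is_chain L' S'" using S'(1) unfolding maxc_def by blast
    have "card S2 \<le> card S'" using S'(1) cS2 unfolding maxc_def by blast
    then have big: "card S' \<ge> card S + 1" using cardS2 by simp
    have "\<exists>x. x @ [False] \<in> S' \<and> x @ [True] \<in> S'"
    proof (rule ccontr)
      assume nd: "\<not> ?thesis"
      have "card S' = card (butlast ` S')" using card_proj_nodbl[OF cS' nd] .
      moreover have "card (butlast ` S') \<le> card S" using S(1) chain_proj[OF cS'] unfolding maxc_def by blast
      ultimately show False using big by simp
    qed
    then obtain x where x: "x @ [False] \<in> S'" "x @ [True] \<in> S'" by blast
    have "card (butlast ` S') \<ge> card S" using card_proj[OF cS'] big by simp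
    then have mB: "maxc L (butlast ` S')" unfolding maxc_def
    proof (intro conjI allI impI)
      show "is_chain L (butlast ` S')" using chain_proj[OF cS'] .
      fix T assume "is_chain L T"
      then have "card T \<le> card S" using S(1) unfolding maxc_def by blast
      then show "card T \<le> card (butlast ` S')" using \<open>card (butlast ` S') \<ge> card S\<close> by simp
    qed
    have lmB: "\<forall>m\<in>butlast ` S'. left_modular_elem L m" using maxc_sub_spine[OF mB] sp by blast
    have S'C: "S' \<subseteq> carrier L'" using cS' unfolding is_chain_def by blast
    obtain m k where mk: "z = m @ [k]" "ok m k" using carr_form S'(2) S'C by blast
    have mA: "m \<in> A" using mk okA by blast
    have "m \<in> butlast ` S'" using S'(2) mk(1) by (metis butlast_snoc image_eqI)
    then have lmm: "left_modular_elem L m" using lmB by blast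
    show "z \<in> {m. left_modular_elem L' m}"
    proof (cases k)
      case False
      then have "le m b" using mk okF by simp
      then show ?thesis using LM0[OF mA _ lmm] mk False by simp
    next
      case True
      have "leq L' z (x @ [False]) \<or> leq L' (x @ [False]) z" using cS' S'(2) x(1) unfolding is_chain_def by blast
      then have xm: "le x m" using mk True leq' by simp
      have okx: "ok x False" "ok x True" using x S'C carr by auto
      then have xA: "x \<in> A" and "le x b" and "le a x" using okF okT by auto
      then have "le a m" using trans[OF aA xA mA _ xm] by simp
      then show ?thesis using LM1[OF mA _ lmm] mk True by simp
    qed
  qed
  then show ?thesis using lm by blast
qed

end

lemma chain_subset: "is_chain P S \<Longrightarrow> T \<subseteq> S \<Longrightarrow> is_chain P T"
  unfolding is_chain_def by (meson subset_iff)

lemma snoc_img: "v @ [i] \<in> S \<Longrightarrow> v \<in> butlast ` S"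
  by (metis butlast_snoc image_eqI)

context dbl begin

lemma S1:
  assumes lm': "left_modular L'"
  shows "left_modular L \<and> CC \<inter> spine L \<noteq> {}"
proof -
  interpret L2: flat L' by (rule flat')
  obtain M' where M': "maximal_chain L' M'" "\<forall>z\<in>M'. left_modular_elem L' z"
    using lm' unfolding left_modular_def by blast
  have cM': "is_chain L' M'" using M'(1) unfolding maximal_chain_def by blast
  have M'C: "M' \<subseteq> carrier L'" using cM' unfolding is_chain_def by blast
  have cmp: "\<And>u v. u \<in> M' \<Longrightarrow> v \<in> M' \<Longrightarrow> leq L' u v \<or> leq L' v u" using cM' unfolding is_chain_def by blast
  obtain bt where bt: "bt \<in> A" "\<forall>x\<in>A. le bt x" using bot_ex by blast
  obtain tp where tp: "tp \<in> A" "\<forall>x\<in>A. le x tp" using top_ex by blast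
  have okbt: "ok bt False" using okF bt bA by simp
  have oktp: "ok tp True" using okT tp aA by simp
  have btM: "bt @ [False] \<in> M'"
  proof (rule L2.maxch_add[OF M'(1)])
    show "bt @ [False] \<in> carrier L'" using okbt carr by blast
    show "\<forall>x\<in>M'. leq L' x (bt @ [False]) \<or> leq L' (bt @ [False]) x"
    proof
      fix x assume "x \<in> M'"
      then have xC: "x \<in> carrier L'" using M'C by blast
      obtain y i where "x = y @ [i]" "ok y i" using carr_form[OF xC] by blast
      then show "leq L' x (bt @ [False]) \<or> leq L' (bt @ [False]) x" using bt okA leq' by simp
    qed
  qed
  have tpM: "tp @ [True] \<in> M'"
  proof (rule L2.maxch_add[OF M'(1)])
    show "tp @ [True] \<in> carrier L'" using oktp carr by blast
    show "\<forall>x\<in>M'. leq L' x (tp @ [True]) \<or> leq L' (tp @ [True]) x"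
    proof
      fix x assume "x \<in> M'"
      then have xC: "x \<in> carrier L'" using M'C by blast
      obtain y i where "x = y @ [i]" "ok y i" using carr_form[OF xC] by blast
      then show "leq L' x (tp @ [True]) \<or> leq L' (tp @ [True]) x" using tp okA leq' by simp
    qed
  qed
  define M0 where "M0 = {x. x @ [False] \<in> M'}"
  define M1 where "M1 = {x. x @ [True] \<in> M'}"
  have M0sub: "M0 \<subseteq> butlast ` M'"
  proof
    fix m assume "m \<in> M0"
    then have "m @ [False] \<in> M'" unfolding M0_def by simp
    then show "m \<in> butlast ` M'" by (metis butlast_snoc image_eqI)
  qed
  have M1sub: "M1 \<subseteq> butlast ` M'"
  proof
    fix m assume "m \<in> M1"
    then have "m @ [True] \<in> M'" unfolding M1_def by simp
    then show "m \<in> butlast ` M'" by (metis butlast_snoc image_eqI)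
  qed
  have finM': "finite M'" using L2.chain_fin[OF cM'] .
  have finM0: "finite M0" using M0sub finM' finite_subset by blast
  have finM1: "finite M1" using M1sub finM' finite_subset by blast
  have cB: "is_chain L (butlast ` M')" using chain_proj[OF cM'] .
  have cM0: "is_chain L M0" using chain_subset[OF cB M0sub] .
  have cM1: "is_chain L M1" using chain_subset[OF cB M1sub] .
  have M0ne: "M0 \<noteq> {}" using btM unfolding M0_def by blast
  have M1ne: "M1 \<noteq> {}" using tpM unfolding M1_def by blast
  obtain x where x: "x \<in> M0" "\<forall>y\<in>M0. le y x" using chain_max[OF finM0 M0ne cM0] by blast
  obtain y where y: "y \<in> M1" "\<forall>z\<in>M1. le y z" using chain_min[OF finM1 M1ne cM1] by blast
  have xM: "x @ [False] \<in> M'" and yM: "y @ [True] \<in> M'" using x(1) y(1) unfolding M0_def M1_def by auto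
  have okx: "ok x False" and oky: "ok y True" using xM yM M'C carr by auto
  have xA: "x \<in> A" and xb: "le x b" using okx okF by auto
  have yA: "y \<in> A" using oky okA by blast
  have xy: "le x y"
  proof -
    have "leq L' (x @ [False]) (y @ [True]) \<or> leq L' (y @ [True]) (x @ [False])" using cmp xM yM .
    then show ?thesis using leq' by simp
  qed
  have ay: "le a y"
  proof -
    have oka: "ok a False" "ok a True" using okF okT aA ab refl[OF aA] by auto
    have lmy: "left_modular_elem L' (y @ [True])" using M'(2) yM by blast
    have pc: "a @ [False] \<in> carrier L'" "a @ [True] \<in> carrier L'" using oka carr by auto
    have le1: "leq L' (a @ [False]) (a @ [True])" using leq' refl[OF aA] by simp
    have E: "pmeet L' (pjoin L' (a @ [False]) (y @ [True])) (a @ [True]) =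
             pjoin L' (a @ [False]) (pmeet L' (y @ [True]) (a @ [True]))"
      using lmy pc le1 unfolding left_modular_elem_def by blast
    have okj: "ok (jn a y) True" using ok_jn[OF oka(1) oky] by simp
    have j1: "pjoin L' (a @ [False]) (y @ [True]) = jn a y @ [True]" using join'[OF oka(1) oky] by simp
    have okm: "ok (mt y a) (ml y True a True)" using ok_mt[OF oky oka(2)] .
    have "mt (jn a y) a @ [ml (jn a y) True a True] = jn a (mt y a) @ [False \<or> ml y True a True]"
      using E unfolding j1 meet'[OF okj oka(2)] meet'[OF oky oka(2)] join'[OF oka(1) okm]
      by simp
    then have e: "ml (jn a y) True a True = ml y True a True" by simp
    have jA: "jn a y \<in> A" using jn_in[OF aA yA] .
    have "mt (jn a y) a = a" using mt_comm[OF jA aA] mt_absorb[OF aA jA jn_ub1[OF aA yA]] by simp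
    then have "ml (jn a y) True a True" unfolding ml_def using refl[OF aA] by simp
    then have "ml y True a True" using e by simp
    then have h: "le (mt y a) b \<longrightarrow> le a (mt y a)" unfolding ml_def by simp
    have mA: "mt y a \<in> A" using mt_in[OF yA aA] .
    have "le (mt y a) b" using trans[OF mA aA bA mt_lb2[OF yA aA] ab] .
    then have "le a (mt y a)" using h by simp
    then show ?thesis using trans[OF aA mA yA _ mt_lb1[OF yA aA]] by simp
  qed
  define w where "w = jn x a"
  have wA: "w \<in> A" using jn_in[OF xA aA] w_def by simp
  have xw: "le x w" and aw: "le a w" using jn_ub1[OF xA aA] jn_ub2[OF xA aA] w_def by auto
  have wb: "le w b" using jn_least[OF xA aA bA xb ab] w_def by simp
  have wy: "le w y" using jn_least[OF xA aA yA xy ay] w_def by simp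
  have wC: "w \<in> CC" using wA aw wb CC_def by simp
  have M0le: "\<And>m. m @ [False] \<in> M' \<Longrightarrow> le m w"
  proof -
    fix m assume mM: "m @ [False] \<in> M'"
    then have "m \<in> M0" unfolding M0_def by simp
    moreover have "ok m False" using mM M'C carr by blast
    ultimately have m0: "m \<in> M0" and mA: "m \<in> A" using okA by auto
    have "le m x" using x(2) m0 by blast
    then show "le m w" using trans[OF mA xA wA _ xw] by simp
  qed
  have M1ge: "\<And>m. m @ [True] \<in> M' \<Longrightarrow> le w m"
  proof -
    fix m assume mM: "m @ [True] \<in> M'"
    then have "m \<in> M1" unfolding M1_def by simp
    moreover have "ok m True" using mM M'C carr by blast
    ultimately have m1: "m \<in> M1" and mA: "m \<in> A" using okA by auto
    have "le y m" using y(2) m1 by blast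
    then show "le w m" using trans[OF wA yA mA wy] by simp
  qed
  have wF: "w @ [False] \<in> M'"
  proof (rule L2.maxch_add[OF M'(1)])
    show "w @ [False] \<in> carrier L'" using okF wA wb carr by blast
    show "\<forall>z\<in>M'. leq L' z (w @ [False]) \<or> leq L' (w @ [False]) z"
    proof
      fix z assume z: "z \<in> M'"
      have zC: "z \<in> carrier L'" using z M'C by blast
      obtain m k where mk: "z = m @ [k]" using carr_form[OF zC] by blast
      show "leq L' z (w @ [False]) \<or> leq L' (w @ [False]) z"
        using M0le M1ge z mk leq' by (cases k) auto
    qed
  qed
  have wT: "w @ [True] \<in> M'"
  proof (rule L2.maxch_add[OF M'(1)])
    show "w @ [True] \<in> carrier L'" using okT wA aw carr by blast
    show "\<forall>z\<in>M'. leq L' z (w @ [True]) \<or> leq L' (w @ [True]) z"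
    proof
      fix z assume z: "z \<in> M'"
      have zC: "z \<in> carrier L'" using z M'C by blast
      obtain m k where mk: "z = m @ [k]" using carr_form[OF zC] by blast
      show "leq L' z (w @ [True]) \<or> leq L' (w @ [True]) z"
        using M0le M1ge z mk leq' by (cases k) auto
    qed
  qed
  define B where "B = butlast ` M'"
  have lmB: "\<forall>m\<in>B. left_modular_elem L m"
  proof
    fix m assume "m \<in> B"
    then obtain z where z: "z \<in> M'" "m = butlast z" unfolding B_def by blast
    have zC: "z \<in> carrier L'" using z M'C by blast
    obtain m1 k where mk: "z = m1 @ [k]" "ok m1 k" using carr_form[OF zC] by blast
    then show "left_modular_elem L m" using LMdown[OF mk(2)] M'(2) z by simp
  qed
  have wB: "w \<in> B" unfolding B_def using snoc_img[OF wF] .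
  have mB: "maximal_chain L B"
    unfolding maximal_chain_def
  proof (intro conjI allI impI)
    show "is_chain L B" unfolding B_def by (rule cB)
    fix T assume T: "is_chain L T \<and> B \<subseteq> T"
    show "T = B"
    proof
      show "T \<subseteq> B"
      proof
        fix z assume zT: "z \<in> T"
        have TA: "T \<subseteq> A" using T chain_sub by blast
        have zA: "z \<in> A" using zT TA by blast
        have cT: "\<And>m. m \<in> B \<Longrightarrow> le m z \<or> le z m"
        proof -
          fix m assume "m \<in> B"
          then have "m \<in> T" using T by blast
          then show "le m z \<or> le z m" using chain_cmp[of T m z] T zT by blast
        qed
        have "le z w \<or> le w z" using cT[OF wB] by blast
        then show "z \<in> B"
        proof
          assume zw: "le z w"
          have "z @ [False] \<in> M'"
          proof (rule L2.maxch_add[OF M'(1)])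
            show "z @ [False] \<in> carrier L'" using okF zA trans[OF zA wA bA zw wb] carr by blast
            show "\<forall>u\<in>M'. leq L' u (z @ [False]) \<or> leq L' (z @ [False]) u"
            proof
              fix u assume u: "u \<in> M'"
              have uC: "u \<in> carrier L'" using u M'C by blast
              obtain m k where mk: "u = m @ [k]" "ok m k" using carr_form[OF uC] by blast
              have "m @ [k] \<in> M'" using u mk(1) by simp
              then have mB': "m \<in> B" unfolding B_def by (rule snoc_img)
              have mA: "m \<in> A" using mk okA by blast
              show "leq L' u (z @ [False]) \<or> leq L' (z @ [False]) u"
              proof (cases k)
                case False then show ?thesis using cT[OF mB'] mk leq' by simp
              next
                case True
                then have "le w m" using M1ge u mk by simp
                then have "le z m" using trans[OF zA wA mA zw] by simp
                then show ?thesis using mk True leq' by simp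
              qed
            qed
          qed
          then show "z \<in> B" unfolding B_def by (rule snoc_img)
        next
          assume wz: "le w z"
          have "z @ [True] \<in> M'"
          proof (rule L2.maxch_add[OF M'(1)])
            show "z @ [True] \<in> carrier L'" using okT zA trans[OF aA wA zA aw wz] carr by blast
            show "\<forall>u\<in>M'. leq L' u (z @ [True]) \<or> leq L' (z @ [True]) u"
            proof
              fix u assume u: "u \<in> M'"
              have uC: "u \<in> carrier L'" using u M'C by blast
              obtain m k where mk: "u = m @ [k]" "ok m k" using carr_form[OF uC] by blast
              have "m @ [k] \<in> M'" using u mk(1) by simp
              then have mB': "m \<in> B" unfolding B_def by (rule snoc_img)
              have mA: "m \<in> A" using mk okA by blast
              show "leq L' u (z @ [True]) \<or> leq L' (z @ [True]) u"
              proof (cases k)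
                case True then show ?thesis using cT[OF mB'] mk leq' by simp
              next
                case False
                then have "le m w" using M0le u mk by simp
                then have "le m z" using trans[OF mA wA zA _ wz] by simp
                then show ?thesis using mk False leq' by simp
              qed
            qed
          qed
          then show "z \<in> B" unfolding B_def by (rule snoc_img)
        qed
      qed
      show "B \<subseteq> T" using T by blast
    qed
  qed
  have lmL: "left_modular L" unfolding left_modular_def using mB lmB by blast
  have "maxc L B"
  proof (rule maxc_intro)
    show "is_chain L B" using mB unfolding maximal_chain_def by blast
    show "\<forall>T. is_chain L T \<longrightarrow> card T \<le> card B" using T1[OF mB lmB] by blast
  qed
  then have "w \<in> spine L" unfolding spine_iff using wB by blast
  then show ?thesis using lmL wC by blast
qed

end

lemma E_seq_snoc: "E_seq (Cs @ [C]) = double (E_seq Cs) C"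
  unfolding E_seq_def by simp

lemma valid_snoc:
  assumes "valid_seq (Cs @ [C])"
  shows "valid_seq Cs" "is_interval (E_seq Cs) C"
proof -
  show "valid_seq Cs" unfolding valid_seq_def
  proof (intro allI impI)
    fix i assume i: "i < length Cs"
    have "is_interval (E_seq (take i (Cs @ [C]))) ((Cs @ [C]) ! i) \<and> (Cs @ [C]) ! i \<noteq> {}"
      using assms i unfolding valid_seq_def by simp
    then show "is_interval (E_seq (take i Cs)) (Cs ! i) \<and> Cs ! i \<noteq> {}"
      using i by (simp add: nth_append)
  qed
  have "\<forall>i<length (Cs @ [C]). is_interval (E_seq (take i (Cs @ [C]))) ((Cs @ [C]) ! i) \<and> (Cs @ [C]) ! i \<noteq> {}"
    using assms unfolding valid_seq_def by blast
  then have "is_interval (E_seq (take (length Cs) (Cs @ [C]))) ((Cs @ [C]) ! length Cs)"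
    by (metis length_append_singleton lessI)
  then show "is_interval (E_seq Cs) C" by simp
qed

lemma cond_snoc:
  "(\<forall>i<length (Cs @ [C]). (Cs @ [C]) ! i \<inter> spine (E_seq (take i (Cs @ [C]))) \<noteq> {}) \<longleftrightarrow>
   (\<forall>i<length Cs. Cs ! i \<inter> spine (E_seq (take i Cs)) \<noteq> {}) \<and> C \<inter> spine (E_seq Cs) \<noteq> {}"
  (is "?L \<longleftrightarrow> ?R")
proof
  assume L: ?L
  have 1: "\<forall>i<length Cs. Cs ! i \<inter> spine (E_seq (take i Cs)) \<noteq> {}"
  proof (intro allI impI)
    fix i assume i: "i < length Cs"
    then show "Cs ! i \<inter> spine (E_seq (take i Cs)) \<noteq> {}" using L[rule_format, of i] by (simp add: nth_append)
  qed
  have "C \<inter> spine (E_seq Cs) \<noteq> {}" using L[rule_format, of "length Cs"] by simp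
  then show ?R using 1 by blast
next
  assume R: ?R
  show ?L
  proof (intro allI impI)
    fix i assume i: "i < length (Cs @ [C])"
    show "(Cs @ [C]) ! i \<inter> spine (E_seq (take i (Cs @ [C]))) \<noteq> {}"
    proof (cases "i < length Cs")
      case True then show ?thesis using R by (simp add: nth_append)
    next
      case False
      then have "i = length Cs" using i by simp
      then show ?thesis using R by simp
    qed
  qed
qed

lemma flat_E0: "flat ({[]}, \<lambda>x y. True)"
  by (unfold_locales) (auto simp: carrier_def leq_def)

lemma base_lm: "left_modular ({[]}, \<lambda>x y. True)"
proof -
  have "maximal_chain ({[]}, \<lambda>x y. True) {[]}"
    unfolding maximal_chain_def is_chain_def by (auto simp: carrier_def leq_def)
  moreover have "left_modular_elem ({[]}, \<lambda>x y. True) []"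
    unfolding left_modular_elem_def by (simp add: carrier_def)
  ultimately show ?thesis unfolding left_modular_def by blast
qed

lemma base_spine: "spine ({[]}, \<lambda>x y. True) \<subseteq> {m. left_modular_elem ({[]}, \<lambda>x y. True) m}"
proof
  fix x assume "x \<in> spine ({[]}, \<lambda>x y. True)"
  then have "x \<in> carrier ({[]}, \<lambda>x y. True)" unfolding spine_def is_chain_def by blast
  then have "x = []" by (simp add: carrier_def)
  then show "x \<in> {m. left_modular_elem ({[]}, \<lambda>x y. True) m}"
    unfolding left_modular_elem_def by (simp add: carrier_def)
qed

lemma main_ind:
  "valid_seq Cs \<Longrightarrow> flat (E_seq Cs) \<and>
     (left_modular (E_seq Cs) \<longleftrightarrow> (\<forall>i<length Cs. Cs ! i \<inter> spine (E_seq (take i Cs)) \<noteq> {})) \<and>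
     (left_modular (E_seq Cs) \<longrightarrow> spine (E_seq Cs) \<subseteq> {m. left_modular_elem (E_seq Cs) m})"
proof (induction Cs rule: rev_induct)
  case Nil
  have e: "E_seq [] = ({[]}, \<lambda>x y. True)" unfolding E_seq_def by simp
  have "\<forall>i<length ([] :: bool list set list). True" by simp
  show ?case unfolding e using flat_E0 base_lm base_spine by auto
next
  case (snoc C Cs)
  have vCs: "valid_seq Cs" and iC: "is_interval (E_seq Cs) C" using valid_snoc[OF snoc.prems] by auto
  define L where "L = E_seq Cs"
  have IH: "flat L" "left_modular L \<longleftrightarrow> (\<forall>i<length Cs. Cs ! i \<inter> spine (E_seq (take i Cs)) \<noteq> {})"
    "left_modular L \<longrightarrow> spine L \<subseteq> {m. left_modular_elem L m}"
    using snoc.IH[OF vCs] unfolding L_def by auto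
  obtain a b where ab: "a \<in> carrier L" "b \<in> carrier L" "leq L a b"
    and Cdef: "C = {z\<in>carrier L. leq L a z \<and> leq L z b}"
    using iC unfolding is_interval_def L_def by blast
  interpret dbl L a b
    by (rule dbl.intro[OF IH(1)]) (unfold_locales, use ab in auto)
  have CC: "CC = C" unfolding CC_def Cdef ..
  have L'eq: "L' = double L C" unfolding L'_def CC ..
  have L': "E_seq (Cs @ [C]) = L'" using L'eq E_seq_snoc[of Cs C] L_def by simp
  have fl: "flat (E_seq (Cs @ [C]))" unfolding L' by (rule flat')
  have eq: "left_modular L' \<longleftrightarrow> left_modular L \<and> C \<inter> spine L \<noteq> {}"
  proof
    assume "left_modular L'"
    then show "left_modular L \<and> C \<inter> spine L \<noteq> {}" using S1 CC by simp
  next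
    assume h: "left_modular L \<and> C \<inter> spine L \<noteq> {}"
    then obtain w where "w \<in> CC" "w \<in> spine L" using CC by blast
    then show "left_modular L'" using S23 IH(3) h by blast
  qed
  have sp: "left_modular L' \<longrightarrow> spine L' \<subseteq> {m. left_modular_elem L' m}"
  proof
    assume "left_modular L'"
    then have h: "left_modular L \<and> C \<inter> spine L \<noteq> {}" using eq by blast
    then obtain w where "w \<in> CC" "w \<in> spine L" using CC by blast
    then show "spine L' \<subseteq> {m. left_modular_elem L' m}" using S23 IH(3) h by blast
  qed
  show ?case unfolding L' cond_snoc using fl[unfolded L'] eq sp IH(2) unfolding L_def by blast
qed

theorem corollary3p21:
  assumes "valid_seq Cs"
  shows "left_modular (E_seq Cs) \<longleftrightarrow>
           (\<forall>i<length Cs. Cs ! i \<inter> spine (E_seq (take i Cs)) \<noteq> {})"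
  using main_ind[OF assms] by blast

end
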